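(* Let $A\in\mathbb R^{m\times n}$, $b\in\mathbb R^m$, $c\in\mathbb R^n$ with $b>\mathbf 0$ and $c>\mathbf 0$, and let $(P)$: $\max c^\intercal x$ s.t. $Ax\le b$, $x\ge\mathbf 0$, with dual $(D)$: $\min b^\intercal y$ s.t. $A^\intercal y\ge c$, $y\ge\mathbf 0$. Consider the zero-sum game with the skew-symmetric $(m+n+1)\times(m+n+1)$ payoff matrix $$\begin{pmatrix}\mathbf 0 & A & -b\\ -A^\intercal & \mathbf 0 & c\\ b^\intercal & -c^\intercal & 0\end{pmatrix},$$ and let $(p^*,q^*,t^* )$ (with $p^*\in\mathbb R^m$, $q^*\in\mathbb R^n$, $t^*\in\mathbb R$) be a maximin strategy of the row player. Then: 1. If $t^*>0$, then $\left(\frac1{t^*}q^*,\frac1{t^*}p^*\right)$ is an optimal primal-dual pair for $(P,D)$. 2. If $t^*=0$, then $q^*$ is an unboundedness certificate for $(P)$.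
   Context: Inequalities are componentwise. In a zero-sum game with payoff matrix $N$, mixed strategies are probability vectors, the row player receives $p^\intercal Nq$, and a maximin strategy of the row player is a $p^*\in\arg\max_p\min_q p^\intercal Nq$. An optimal primal-dual pair is a primal feasible $x$ and dual feasible $y$ with $c^\intercal x=b^\intercal y$; an unboundedness certificate for $(P)$ is $w$ with $Aw\le\mathbf 0$, $w\ge\mathbf 0$, $c^\intercal w>0$. *)

theory Defs
  imports "HOL-Analysis.Analysis"
begin

text \<open>Index set of the game: rows/columns indexed by 'm + ('n + unit),
  i.e. m rows for p, n rows for q, and one row for t.\<close>

definition game_matrix ::
  "real^'n^'m \<Rightarrow> real^'m \<Rightarrow> real^'n \<Rightarrow> real^('m + ('n + unit))^('m + ('n + unit))" where
  "game_matrix A b c = (\<chi> r s.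
     (case r of
        Inl i \<Rightarrow> (case s of Inl i' \<Rightarrow> 0
                         | Inr (Inl j') \<Rightarrow> A $ i $ j'
                         | Inr (Inr _) \<Rightarrow> - b $ i)
      | Inr (Inl j) \<Rightarrow> (case s of Inl i' \<Rightarrow> - A $ i' $ j
                         | Inr (Inl j') \<Rightarrow> 0
                         | Inr (Inr _) \<Rightarrow> c $ j)
      | Inr (Inr _) \<Rightarrow> (case s of Inl i' \<Rightarrow> b $ i'
                         | Inr (Inl j') \<Rightarrow> - c $ j'
                         | Inr (Inr _) \<Rightarrow> 0)))"

definition mixed_strategy :: "real^'k \<Rightarrow> bool" where
  "mixed_strategy p \<longleftrightarrow> (\<forall>i. 0 \<le> p $ i) \<and> (\<Sum>i\<in>UNIV. p $ i) = 1"

definition game_payoff :: "real^'k^'k \<Rightarrow> real^'k \<Rightarrow> real^'k \<Rightarrow> real" where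
  "game_payoff N p q = p \<bullet> (N *v q)"

definition maximin_strategy :: "real^'k^'k \<Rightarrow> real^'k \<Rightarrow> bool" where
  "maximin_strategy N p \<longleftrightarrow> mixed_strategy p \<and>
     (\<forall>p'. mixed_strategy p' \<longrightarrow>
        (INF q\<in>{q. mixed_strategy q}. game_payoff N p' q)
          \<le> (INF q\<in>{q. mixed_strategy q}. game_payoff N p q))"

definition primal_feasible :: "real^'n^'m \<Rightarrow> real^'m \<Rightarrow> real^'n \<Rightarrow> bool" where
  "primal_feasible A b x \<longleftrightarrow> (\<forall>i. (A *v x) $ i \<le> b $ i) \<and> (\<forall>j. 0 \<le> x $ j)"

definition dual_feasible :: "real^'n^'m \<Rightarrow> real^'n \<Rightarrow> real^'m \<Rightarrow> bool" where
  "dual_feasible A c y \<longleftrightarrow> (\<forall>j. (transpose A *v y) $ j \<ge> c $ j) \<and> (\<forall>i. 0 \<le> y $ i)"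

definition optimal_primal_dual_pair ::
  "real^'n^'m \<Rightarrow> real^'m \<Rightarrow> real^'n \<Rightarrow> real^'n \<Rightarrow> real^'m \<Rightarrow> bool" where
  "optimal_primal_dual_pair A b c x y \<longleftrightarrow>
     primal_feasible A b x \<and> dual_feasible A c y \<and> c \<bullet> x = b \<bullet> y"

definition unboundedness_certificate :: "real^'n^'m \<Rightarrow> real^'n \<Rightarrow> real^'n \<Rightarrow> bool" where
  "unboundedness_certificate A c w \<longleftrightarrow>
     (\<forall>i. (A *v w) $ i \<le> 0) \<and> (\<forall>j. 0 \<le> w $ j) \<and> c \<bullet> w > 0"

end

theory Submission imports Defs begin

lemma payoff_swap:
  fixes N :: "real^'k^'k"
  shows "p \<bullet> (N *v q) = (\<Sum>s\<in>UNIV. q$s * (\<Sum>r\<in>UNIV. p$r * N$r$s))"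
proof -
  have "p \<bullet> (N *v q) = (\<Sum>r\<in>UNIV. \<Sum>s\<in>UNIV. p$r * (N$r$s * q$s))"
    unfolding inner_vec_def matrix_vector_mult_def by (simp add: sum_distrib_left)
  also have "\<dots> = (\<Sum>s\<in>UNIV. \<Sum>r\<in>UNIV. p$r * (N$r$s * q$s))"
    by (rule sum.swap)
  also have "\<dots> = (\<Sum>s\<in>UNIV. q$s * (\<Sum>r\<in>UNIV. p$r * N$r$s))"
    by (simp add: sum_distrib_left mult_ac)
  finally show ?thesis .
qed

lemma skew_quad:
  fixes N :: "real^'k^'k"
  assumes sk: "\<And>r s. N$r$s = - N$s$r"
  shows "a \<bullet> (N *v a) = 0"
proof -
  have "a \<bullet> (N *v a) = (\<Sum>s\<in>UNIV. a$s * (\<Sum>r\<in>UNIV. a$r * N$r$s))" by (rule payoff_swap)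
  also have "\<dots> = - (\<Sum>s\<in>UNIV. a$s * (\<Sum>r\<in>UNIV. N$s$r * a$r))"
  proof -
    have eq: "a$s * (a$r * N$r$s) = -(a$s * (N$s$r * a$r))" for r s
      using sk[of r s] by simp
    show ?thesis by (simp only: sum_distrib_left eq sum_negf)
  qed
  also have "(\<Sum>s\<in>UNIV. a$s * (\<Sum>r\<in>UNIV. N$s$r * a$r)) = a \<bullet> (N *v a)"
    unfolding inner_vec_def matrix_vector_mult_def by simp
  finally show ?thesis by simp
qed

lemma mixed_le1: "mixed_strategy p \<Longrightarrow> p$i \<le> 1"
  unfolding mixed_strategy_def
  by (metis finite_class.finite_UNIV iso_tuple_UNIV_I member_le_sum)

lemma mixed_axis: "mixed_strategy (axis i (1::real))"
  unfolding mixed_strategy_def axis_def by (auto simp: sum.delta)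

lemma compact_mixed: "compact {p::real^'k. mixed_strategy p}"
proof (rule compact_eq_bounded_closed[THEN iffD2, OF conjI])
  show "bounded {p::real^'k. mixed_strategy p}"
    by (rule bounded_subset[OF bounded_cbox[of 0 1]])
       (auto simp: mem_box_cart mixed_le1 mixed_strategy_def)
  have "{p::real^'k. mixed_strategy p} = (\<Inter>i. {p. 0 \<le> p$i}) \<inter> {p. (\<Sum>i\<in>UNIV. p $ i) = 1}"
    unfolding mixed_strategy_def by auto
  also have "closed \<dots>"
    by (intro closed_Int closed_INT ballI closed_Collect_le closed_Collect_eq continuous_intros)
  finally show "closed {p::real^'k. mixed_strategy p}" .
qed

lemma convex_mixed: "convex {p::real^'k. mixed_strategy p}"
  unfolding convex_def mixed_strategy_def
  by (auto simp: sum.distrib sum_distrib_left[symmetric])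

lemma skew_game:
  fixes N :: "real^'k^'k"
  assumes sk: "\<And>r s. N$r$s = - N$s$r"
  shows "\<exists>p. mixed_strategy p \<and> (\<forall>s. 0 \<le> (\<Sum>r\<in>UNIV. p$r * N$r$s))"
proof -
  define P where "P = {p::real^'k. mixed_strategy p}"
  define U where "U = {u::real^'k. \<forall>i. 0 \<le> u$i}"
  define S where "S = (\<Union>x\<in>(\<lambda>p. N *v p) ` P. \<Union>y\<in>U. {x + y})"
  have cU: "closed U" unfolding U_def
    by (simp add: Collect_all_eq closed_INT closed_Collect_le continuous_intros)
  have vU: "convex U" unfolding U_def convex_def by auto
  have cP: "compact ((\<lambda>p. N *v p) ` P)" unfolding P_def
    by (intro compact_continuous_image compact_mixed continuous_intros)
  have vP: "convex ((\<lambda>p. N *v p) ` P)" unfolding P_def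
    by (intro convex_linear_image convex_mixed matrix_vector_mul_linear)
  have "0 \<in> S"
  proof (rule ccontr)
    assume "0 \<notin> S"
    then obtain a e where ae: "inner a 0 < e" "\<forall>x\<in>S. e < inner a x"
      using separating_hyperplane_closed_point[of S 0] unfolding S_def
      using compact_closed_sums[OF cP cU] convex_sums[OF vP vU] by blast
    have e: "e > 0" using ae by simp
    have main: "e < a \<bullet> (N *v p) + a \<bullet> u" if "mixed_strategy p" "\<forall>i. 0 \<le> u$i" for p u
      using ae(2) that unfolding S_def P_def U_def by (force simp: inner_add_right)
    define p0 where "p0 = axis (undefined::'k) (1::real)"
    have p0: "mixed_strategy p0" unfolding p0_def by (rule mixed_axis)
    have anz: "0 \<le> a$i" for i
    proof (rule ccontr)
      assume neg: "\<not> 0 \<le> a$i"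
      define k where "k = \<bar>a \<bullet> (N *v p0)\<bar> / (- a$i)"
      have k: "k \<ge> 0" using neg unfolding k_def by (intro divide_nonneg_pos) auto
      have "e < a \<bullet> (N *v p0) + a \<bullet> (k *\<^sub>R axis i 1)"
        by (rule main[OF p0]) (auto simp: axis_def k)
      also have "a \<bullet> (k *\<^sub>R axis i 1) = k * a$i"
        by (simp add: inner_axis)
      also have "k * a$i = - \<bar>a \<bullet> (N *v p0)\<bar>" unfolding k_def using neg by simp
      finally show False using e by linarith
    qed
    have pos: "e < a \<bullet> (N *v p)" if "mixed_strategy p" for p
      using main[OF that, of 0] by simp
    have "a \<noteq> 0" using pos[OF p0] e by auto
    then obtain i where "a$i \<noteq> 0" by (metis vec_eq_iff zero_index)
    then have ai: "a$i > 0" using anz[of i] by simp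
    define \<sigma> where "\<sigma> = (\<Sum>j\<in>UNIV. a$j)"
    have "a$i \<le> \<sigma>" unfolding \<sigma>_def
      by (rule member_le_sum) (auto simp: anz)
    then have sp: "\<sigma> > 0" using ai by simp
    have "mixed_strategy ((1/\<sigma>) *\<^sub>R a)"
      unfolding mixed_strategy_def using sp anz
      by (auto simp: sum_divide_distrib[symmetric] \<sigma>_def)
    from pos[OF this] have "e < (1/\<sigma>) * (a \<bullet> (N *v a))"
      by (simp add: matrix_vector_mult_scaleR)
    then show False using skew_quad[OF sk, of a] e by simp
  qed
  then obtain p u where pu: "mixed_strategy p" "\<forall>i. 0 \<le> u$i" "N *v p + u = 0"
    unfolding S_def P_def U_def by auto
  have "0 \<le> (\<Sum>r\<in>UNIV. p$r * N$r$s)" for s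
  proof -
    have "(\<Sum>r\<in>UNIV. p$r * N$r$s) = - (N *v p)$s"
    proof -
      have eq: "p$r * N$r$s = -(N$s$r * p$r)" for r
        using sk[of r s] by simp
      show ?thesis by (simp only: matrix_vector_mult_def vec_lambda_beta eq sum_negf)
    qed
    also have "(N *v p) = - u" using pu(3) by (simp add: eq_neg_iff_add_eq_0)
    finally show ?thesis using pu(2) by simp
  qed
  with pu show ?thesis by blast
qed


lemma sum_plus_univ:
  fixes g :: "('a::finite + 'b::finite) \<Rightarrow> real"
  shows "(\<Sum>r\<in>UNIV. g r) = (\<Sum>i\<in>UNIV. g (Inl i)) + (\<Sum>j\<in>UNIV. g (Inr j))"
  using sum.Plus[of "UNIV::'a set" "UNIV::'b set" g] by (simp add: comp_def)

lemma sum_game_idx: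
  fixes f :: "('m::finite + ('n::finite + unit)) \<Rightarrow> real"
  shows "(\<Sum>r\<in>UNIV. f r) = (\<Sum>i\<in>UNIV. f (Inl i)) + (\<Sum>j\<in>UNIV. f (Inr (Inl j))) + f (Inr (Inr ()))"
  unfolding sum_plus_univ[of f] sum_plus_univ[of "\<lambda>r. f (Inr r)"] by (simp add: UNIV_unit)

theorem proposition4:
  fixes A :: "real^'n^'m" and b :: "real^'m" and c :: "real^'n"
    and z :: "real^('m + ('n + unit))"
  assumes b_pos: "\<forall>i. b $ i > 0"
    and c_pos: "\<forall>j. c $ j > 0"
    and maximin: "maximin_strategy (game_matrix A b c) z"
  defines "p \<equiv> (\<chi> i. z $ Inl i) :: real^'m"
    and "q \<equiv> (\<chi> j. z $ Inr (Inl j)) :: real^'n"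
    and "t \<equiv> z $ Inr (Inr ())"
  shows "(t > 0 \<longrightarrow> optimal_primal_dual_pair A b c ((1 / t) *\<^sub>R q) ((1 / t) *\<^sub>R p))
       \<and> (t = 0 \<longrightarrow> unboundedness_certificate A c q)"
proof -
  define N where "N = game_matrix A b c"
  have sk: "N$r$s = - N$s$r" for r s
    unfolding N_def game_matrix_def by (simp split: sum.split)
  obtain p0 where p0: "mixed_strategy p0" "\<forall>s. 0 \<le> (\<Sum>r\<in>UNIV. p0$r * N$r$s)"
    using skew_game[OF sk] by blast
  define Q where "Q = {q::real^('m + ('n + unit)). mixed_strategy q}"
  have Qne: "Q \<noteq> {}" unfolding Q_def using mixed_axis by blast
  have "0 \<le> (INF q\<in>Q. game_payoff N p0 q)"
  proof (rule cINF_greatest[OF Qne])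
    fix x assume "x \<in> Q"
    then have xn: "\<forall>s. 0 \<le> x$s" unfolding Q_def mixed_strategy_def by simp
    show "0 \<le> game_payoff N p0 x"
      unfolding game_payoff_def payoff_swap
    proof (intro sum_nonneg)
      fix s
      have "0 \<le> x$s" using xn by blast
      moreover have "0 \<le> (\<Sum>r\<in>UNIV. p0$r * N$r$s)" using p0(2) by blast
      ultimately show "0 \<le> x$s * (\<Sum>r\<in>UNIV. p0$r * N$r$s)" by (rule mult_nonneg_nonneg)
    qed
  qed
  also have "\<dots> \<le> (INF q\<in>Q. game_payoff N z q)"
    using maximin p0(1) unfolding maximin_strategy_def N_def Q_def by blast
  finally have inf0: "0 \<le> (INF q\<in>Q. game_payoff N z q)" .
  define w where "w s = (\<Sum>r\<in>UNIV. z$r * N$r$s)" for s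
  have bdd: "bdd_below ((game_payoff N z) ` Q)"
  proof (rule bdd_belowI2)
    fix x assume "x \<in> Q"
    then have x: "\<forall>s. 0 \<le> x$s" "\<forall>s. x$s \<le> 1" unfolding Q_def using mixed_le1
      by (auto simp: mixed_strategy_def)
    have "x$s * w s \<ge> - \<bar>w s\<bar>" for s
    proof -
      have xs0: "0 \<le> x$s" and xs1: "x$s \<le> 1" using x by blast+
      have "- \<bar>w s\<bar> \<le> w s" by (cases "w s \<ge> 0") auto
      then have "x$s * (- \<bar>w s\<bar>) \<le> x$s * w s" using xs0 by (rule mult_left_mono)
      moreover have "x$s * \<bar>w s\<bar> \<le> 1 * \<bar>w s\<bar>"
        using xs1 by (rule mult_right_mono) simp
      ultimately show ?thesis by simp
    qed
    then have "(\<Sum>s\<in>UNIV. - \<bar>w s\<bar>) \<le> (\<Sum>s\<in>UNIV. x$s * w s)"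
      by (intro sum_mono) auto
    then show "- (\<Sum>s\<in>UNIV. \<bar>w s\<bar>) \<le> game_payoff N z x"
      unfolding game_payoff_def payoff_swap w_def by (simp add: sum_negf)
  qed
  have w0: "0 \<le> w s" for s
  proof -
    have ax: "axis s 1 \<in> Q" unfolding Q_def using mixed_axis by blast
    have "game_payoff N z (axis s 1) = w s"
      unfolding game_payoff_def payoff_swap w_def by (simp add: axis_def if_distrib[of "\<lambda>a. a * _"] cong: if_cong)
    moreover have "(INF q\<in>Q. game_payoff N z q) \<le> game_payoff N z (axis s 1)"
      by (rule cINF_lower[OF bdd ax])
    ultimately show ?thesis using inf0 by simp
  qed
  have znn: "\<forall>r. 0 \<le> z$r" and zs: "(\<Sum>r\<in>UNIV. z$r) = 1"
    using maximin unfolding maximin_strategy_def mixed_strategy_def by auto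
  have pnn: "0 \<le> p$i" for i unfolding p_def using znn by simp
  have qnn: "0 \<le> q$j" for j unfolding q_def using znn by simp
  have tnn: "0 \<le> t" unfolding t_def using znn by simp
  have sum1: "(\<Sum>i\<in>UNIV. p$i) + (\<Sum>j\<in>UNIV. q$j) + t = 1"
    using zs unfolding sum_game_idx[of "\<lambda>r. z$r"] p_def q_def t_def by simp
  have W1: "(A *v q)$i \<le> t * b$i" for i
  proof -
    have "w (Inl i) = - (A *v q)$i + t * b$i"
      unfolding w_def sum_game_idx[of "\<lambda>r. z$r * N$r$(Inl i)"]
      by (simp add: N_def game_matrix_def matrix_vector_mult_def q_def t_def sum_negf mult_ac)
    then show ?thesis using w0[of "Inl i"] by simp
  qed
  have W2: "t * c$j \<le> (transpose A *v p)$j" for j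
  proof -
    have "w (Inr (Inl j)) = (transpose A *v p)$j - t * c$j"
      unfolding w_def sum_game_idx[of "\<lambda>r. z$r * N$r$(Inr (Inl j))"]
      by (simp add: N_def game_matrix_def matrix_vector_mult_def transpose_def p_def t_def mult_ac)
    then show ?thesis using w0[of "Inr (Inl j)"] by simp
  qed
  have W3: "b \<bullet> p \<le> c \<bullet> q"
  proof -
    have "w (Inr (Inr ())) = c \<bullet> q - b \<bullet> p"
      unfolding w_def sum_game_idx[of "\<lambda>r. z$r * N$r$(Inr (Inr ()))"]
      by (simp add: N_def game_matrix_def inner_vec_def p_def q_def sum_negf mult_ac)
    then show ?thesis using w0[of "Inr (Inr ())"] by simp
  qed
  have swapAq: "p \<bullet> (A *v q) = (transpose A *v p) \<bullet> q"
    by (simp add: dot_lmul_matrix[symmetric] vector_transpose_matrix)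
  show ?thesis
  proof (intro conjI impI)
    assume tp: "t > 0"
    have pf: "primal_feasible A b ((1 / t) *\<^sub>R q)"
      unfolding primal_feasible_def using tp W1 qnn
      by (auto simp: matrix_vector_mult_scaleR field_simps mult.commute)
    have df: "dual_feasible A c ((1 / t) *\<^sub>R p)"
      unfolding dual_feasible_def using tp W2 pnn
      by (auto simp: matrix_vector_mult_scaleR field_simps mult.commute)
    have "t * (c \<bullet> q) \<le> (transpose A *v p) \<bullet> q"
      unfolding inner_vec_def sum_distrib_left
      using mult_right_mono[OF W2 qnn] by (intro sum_mono) (simp add: mult.assoc)
    also have "\<dots> = p \<bullet> (A *v q)" using swapAq by simp
    also have "\<dots> \<le> t * (b \<bullet> p)"
      unfolding inner_vec_def inner_real_def sum_distrib_left
    proof (intro sum_mono)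
      fix j
      have "p$j * (A *v q)$j \<le> p$j * (t * b$j)" using mult_left_mono[OF W1 pnn] .
      then show "p$j * (A *v q)$j \<le> t * (b$j * p$j)" by (simp add: mult_ac)
    qed
    finally have "c \<bullet> q \<le> b \<bullet> p" using tp by simp
    with W3 have "c \<bullet> q = b \<bullet> p" by simp
    then have "c \<bullet> ((1 / t) *\<^sub>R q) = b \<bullet> ((1 / t) *\<^sub>R p)" by simp
    with pf df show "optimal_primal_dual_pair A b c ((1 / t) *\<^sub>R q) ((1 / t) *\<^sub>R p)"
      unfolding optimal_primal_dual_pair_def by simp
  next
    assume t0: "t = 0"
    have "0 < c \<bullet> q"
    proof (cases "\<exists>j. q$j \<noteq> 0")
      case True
      then obtain j where "q$j \<noteq> 0" by blast
      then have "0 < c$j * q$j" using qnn[of j] c_pos by simp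
      also have "\<dots> \<le> c \<bullet> q" unfolding inner_vec_def inner_real_def
        by (rule member_le_sum) (use c_pos qnn in \<open>auto intro: mult_nonneg_nonneg less_imp_le\<close>)
      finally show ?thesis .
    next
      case False
      then have "(\<Sum>i\<in>UNIV. p$i) = 1" using sum1 t0 by simp
      then obtain i where "p$i \<noteq> 0" by (metis sum.neutral zero_neq_one)
      then have "0 < b$i * p$i" using pnn[of i] b_pos by simp
      also have "\<dots> \<le> b \<bullet> p" unfolding inner_vec_def inner_real_def
        by (rule member_le_sum) (use b_pos pnn in \<open>auto intro: mult_nonneg_nonneg less_imp_le\<close>)
      finally show ?thesis using W3 by simp
    qed
    then show "unboundedness_certificate A c q"
      unfolding unboundedness_certificate_def using W1 t0 qnn by simp
  qed
qed

end
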